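(* Let $n$ be odd and let $A$ be a latin square on the symbol set $\{0,\dots,n-1\}$ which is idempotent (the entry in row $x$, column $x$ is $x$) and commutative (the entry in row $x$, column $y$ equals the entry in row $y$, column $x$). Let $X=\{0,\dots,n-1\}\times\{0,1,2\}$ and let $S_{3n}$ be the Steiner latin square on $X$ associated with the Steiner triple system $S^1\cup S^2$, where $$S^1=\{\{(x,i),(y,i),(z,i+1 \bmod 3)\} : (x,y,z)\in A,\ x\ne y,\ i\in\{0,1,2\}\},\qquad S^2=\{\{(x,0),(x,1),(x,2)\}: x\in\{0,\dots,n-1\}\}.$$ For a transversal $T$ of $A$ define $T'\subseteq X^3$ as follows: for each $(a,b,c)\in T$ with $a\ne b$, put $((a,0),(b,0),(c,1)),\ ((a,1),(b,1),(c,2)),\ ((a,2),(b,2),(c,0))$ into $T'$; for each $(a,a,a)\in T$, put $((a,0),(a,1),(a,2)),\ ((a,1),(a,2),(a,0)),\ ((a,2),(a,0),(a,1))$ into $T'$. Then $T'$ is a transversal of $S_{3n}$, the map $T\mapsto T'$ is injective, and pairwise disjoint transversals of $A$ are mapped to pairwise disjoint transversals of $S_{3n}$.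
   Context: A latin square of order $m$ on a symbol set $Y$ with $|Y|=m$ is identified with a set of ordered triples $(r,c,s)\in Y^3$ meaning symbol $s$ is in row $r$, column $c$, such that each row and each column contains each symbol exactly once. A transversal is a set of $m$ entries containing exactly one entry from each row and each column, with no symbol repeated. A Steiner triple system (STS) on a set $Y$ is a set of $3$-element subsets of $Y$ such that every $2$-element subset of $Y$ lies in exactly one of them; $S^1\cup S^2$ above is an STS on $X$ (Bose's construction). The Steiner latin square of an STS on $Y$ is the latin square consisting of the triples $(a,a,a)$ for all $a\in Y$ together with all six ordered triples $(x,y,z)$ obtained by ordering each triple $\{x,y,z\}$ of the STS. *)

theory Defs
  imports Main
begin

definition latin_square :: "'a set \<Rightarrow> ('a \<times> 'a \<times> 'a) set \<Rightarrow> bool" where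
  "latin_square Y L \<longleftrightarrow> finite Y \<and> L \<subseteq> Y \<times> Y \<times> Y \<and>
     (\<forall>r\<in>Y. \<forall>c\<in>Y. \<exists>!s. (r, c, s) \<in> L) \<and>
     (\<forall>r\<in>Y. \<forall>s\<in>Y. \<exists>!c. (r, c, s) \<in> L) \<and>
     (\<forall>c\<in>Y. \<forall>s\<in>Y. \<exists>!r. (r, c, s) \<in> L)"

definition transversal :: "'a set \<Rightarrow> ('a \<times> 'a \<times> 'a) set \<Rightarrow> ('a \<times> 'a \<times> 'a) set \<Rightarrow> bool" where
  "transversal Y L T \<longleftrightarrow> T \<subseteq> L \<and> finite T \<and> card T = card Y \<and>
     (\<forall>r\<in>Y. \<exists>!e. e \<in> T \<and> fst e = r) \<and>
     (\<forall>c\<in>Y. \<exists>!e. e \<in> T \<and> fst (snd e) = c) \<and>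
     inj_on (\<lambda>e. snd (snd e)) T"

definition steiner_triple_system :: "'a set \<Rightarrow> 'a set set \<Rightarrow> bool" where
  "steiner_triple_system Y S \<longleftrightarrow> (\<forall>B\<in>S. B \<subseteq> Y \<and> card B = 3) \<and>
     (\<forall>x\<in>Y. \<forall>y\<in>Y. x \<noteq> y \<longrightarrow> (\<exists>!B. B \<in> S \<and> {x, y} \<subseteq> B))"

definition steiner_latin_square :: "'a set \<Rightarrow> 'a set set \<Rightarrow> ('a \<times> 'a \<times> 'a) set" where
  "steiner_latin_square Y S =
     {(a, a, a) | a. a \<in> Y} \<union>
     {(x, y, z) | x y z. {x, y, z} \<in> S \<and> x \<noteq> y \<and> y \<noteq> z \<and> x \<noteq> z}"

definition bose_X :: "nat \<Rightarrow> (nat \<times> nat) set" where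
  "bose_X n = {0..<n} \<times> {0..<3}"

definition bose_S1 :: "(nat \<times> nat \<times> nat) set \<Rightarrow> (nat \<times> nat) set set" where
  "bose_S1 A = {{(x, i), (y, i), (z, (i + 1) mod 3)} | x y z i.
                 (x, y, z) \<in> A \<and> x \<noteq> y \<and> i \<in> {0..<3}}"

definition bose_S2 :: "nat \<Rightarrow> (nat \<times> nat) set set" where
  "bose_S2 n = {{(x, 0), (x, 1), (x, 2)} | x. x \<in> {0..<n}}"

definition bose_S :: "nat \<Rightarrow> (nat \<times> nat \<times> nat) set \<Rightarrow> (nat \<times> nat) set set" where
  "bose_S n A = bose_S1 A \<union> bose_S2 n"

definition S3n :: "nat \<Rightarrow> (nat \<times> nat \<times> nat) set \<Rightarrow> ((nat \<times> nat) \<times> (nat \<times> nat) \<times> (nat \<times> nat)) set" where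
  "S3n n A = steiner_latin_square (bose_X n) (bose_S n A)"

definition lift_transversal :: "(nat \<times> nat \<times> nat) set \<Rightarrow> ((nat \<times> nat) \<times> (nat \<times> nat) \<times> (nat \<times> nat)) set" where
  "lift_transversal T =
     {((a, 0), (b, 0), (c, 1)) | a b c. (a, b, c) \<in> T \<and> a \<noteq> b} \<union>
     {((a, 1), (b, 1), (c, 2)) | a b c. (a, b, c) \<in> T \<and> a \<noteq> b} \<union>
     {((a, 2), (b, 2), (c, 0)) | a b c. (a, b, c) \<in> T \<and> a \<noteq> b} \<union>
     {((a, 0), (a, 1), (a, 2)) | a. (a, a, a) \<in> T} \<union>
     {((a, 1), (a, 2), (a, 0)) | a. (a, a, a) \<in> T} \<union>
     {((a, 2), (a, 0), (a, 1)) | a. (a, a, a) \<in> T}"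

end

theory Submission
  imports Defs
begin

definition good :: "(nat \<times> nat \<times> nat) set" where
  "good = {(a,b,c). a = b \<longrightarrow> c = a}"

definition liftg :: "(nat \<times> nat \<times> nat) \<times> nat \<Rightarrow> ((nat \<times> nat) \<times> (nat \<times> nat) \<times> (nat \<times> nat))" where
  "liftg = (\<lambda>((a,b,c),i). if a \<noteq> b then ((a,i),(b,i),(c,(i+1) mod 3))
                           else ((a,i),(a,(i+1) mod 3),(a,(i+2) mod 3)))"

lemma liftg_simp: "liftg ((a,b,c),i) = (if a \<noteq> b then ((a,i),(b,i),(c,(i+1) mod 3))
                           else ((a,i),(a,(i+1) mod 3),(a,(i+2) mod 3)))"
  by (simp add: liftg_def)

lemma three: "{0..<3::nat} = {0,1,2}" by auto

lemma lift_eq: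
  assumes "T \<subseteq> good"
  shows "lift_transversal T = liftg ` (T \<times> {0..<3})"
proof
  show "lift_transversal T \<subseteq> liftg ` (T \<times> {0..<3})"
  proof
    fix e assume "e \<in> lift_transversal T"
    then show "e \<in> liftg ` (T \<times> {0..<3})"
      unfolding lift_transversal_def
    proof (elim UnE CollectE exE conjE)
      fix a b c assume "e = ((a, 0), (b, 0), c, 1)" "(a, b, c) \<in> T" "a \<noteq> b"
      then show ?thesis by (intro image_eqI[of _ _ "((a,b,c),0)"]) (auto simp: liftg_def)
    next
      fix a b c assume "e = ((a, 1), (b, 1), c, 2)" "(a, b, c) \<in> T" "a \<noteq> b"
      then show ?thesis by (intro image_eqI[of _ _ "((a,b,c),1)"]) (auto simp: liftg_def)
    next
      fix a b c assume "e = ((a, 2), (b, 2), c, 0)" "(a, b, c) \<in> T" "a \<noteq> b"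
      then show ?thesis by (intro image_eqI[of _ _ "((a,b,c),2)"]) (auto simp: liftg_def)
    next
      fix a assume "e = ((a, 0), (a, 1), a, 2)" "(a, a, a) \<in> T"
      then show ?thesis by (intro image_eqI[of _ _ "((a,a,a),0)"]) (auto simp: liftg_def)
    next
      fix a assume "e = ((a, 1), (a, 2), a, 0)" "(a, a, a) \<in> T"
      then show ?thesis by (intro image_eqI[of _ _ "((a,a,a),1)"]) (auto simp: liftg_def)
    next
      fix a assume "e = ((a, 2), (a, 0), a, 1)" "(a, a, a) \<in> T"
      then show ?thesis by (intro image_eqI[of _ _ "((a,a,a),2)"]) (auto simp: liftg_def)
    qed
  qed
next
  show "liftg ` (T \<times> {0..<3}) \<subseteq> lift_transversal T"
  proof
    fix e assume "e \<in> liftg ` (T \<times> {0..<3})"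
    then obtain a b c i where m: "(a,b,c) \<in> T" "i \<in> {0,1,2}" "e = liftg ((a,b,c),i)"
      by (auto simp: three)
    show "e \<in> lift_transversal T"
    proof (cases "a = b")
      case True
      with m assms have "c = a" by (auto simp: good_def)
      with True m show ?thesis by (auto simp: liftg_def lift_transversal_def)
    next
      case False
      with m show ?thesis by (auto simp: liftg_def lift_transversal_def)
    qed
  qed
qed

lemma liftg_inj: "inj_on liftg (good \<times> {0..<3})"
  unfolding inj_on_def three good_def liftg_def
  by (auto split: if_splits)


lemma A_good:
  assumes L: "latin_square {0..<n} A" and idem: "\<forall>x\<in>{0..<n}. (x, x, x) \<in> A"
  shows "A \<subseteq> good"
proof
  fix e assume e: "e \<in> A"
  obtain a b c where ee: "e = (a,b,c)" by (cases e) auto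
  show "e \<in> good"
  proof (cases "a = b")
    case True
    from L e ee have an: "a \<in> {0..<n}" unfolding latin_square_def by auto
    with idem have "(a,a,a) \<in> A" by auto
    moreover from L an have "\<exists>!s. (a,a,s) \<in> A" unfolding latin_square_def by auto
    ultimately have "c = a" using e ee True by auto
    with ee show ?thesis by (auto simp: good_def)
  qed (auto simp: good_def ee)
qed

lemma trans_good:
  assumes L: "latin_square {0..<n} A" and idem: "\<forall>x\<in>{0..<n}. (x, x, x) \<in> A"
    and T: "transversal {0..<n} A T"
  shows "T \<subseteq> good"
  using A_good[OF L idem] T unfolding transversal_def by auto

lemma sls_mem: "{x,y,z} \<in> S \<Longrightarrow> x \<noteq> y \<Longrightarrow> y \<noteq> z \<Longrightarrow> x \<noteq> z \<Longrightarrow>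
  (x,y,z) \<in> steiner_latin_square Y S"
  unfolding steiner_latin_square_def by blast

lemma trans_lift:
  assumes L: "latin_square {0..<n} A" and idem: "\<forall>x\<in>{0..<n}. (x, x, x) \<in> A"
    and T: "transversal {0..<n} A T"
  shows "transversal (bose_X n) (S3n n A) (lift_transversal T)"
proof -
  have G: "T \<subseteq> good" using trans_good[OF L idem T] .
  have TA: "T \<subseteq> A" and fT: "finite T" and cT: "card T = n"
    and rows: "\<forall>r\<in>{0..<n}. \<exists>!e. e \<in> T \<and> fst e = r"
    and cols: "\<forall>c\<in>{0..<n}. \<exists>!e. e \<in> T \<and> fst (snd e) = c"
    and syms: "inj_on (\<lambda>e. snd (snd e)) T"
    using T unfolding transversal_def by auto
  have AY: "A \<subseteq> {0..<n} \<times> {0..<n} \<times> {0..<n}" using L unfolding latin_square_def by auto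
  have eq: "lift_transversal T = liftg ` (T \<times> {0..<3})" using lift_eq[OF G] .
  have inj: "inj_on liftg (T \<times> {0..<3})"
    by (rule inj_on_subset[OF liftg_inj]) (use G in auto)
  have sub: "liftg ` (T \<times> {0..<3}) \<subseteq> S3n n A"
  proof
    fix e assume "e \<in> liftg ` (T \<times> {0..<3})"
    then obtain a b c i where m: "(a,b,c) \<in> T" "i \<in> {0,1,2}" "e = liftg ((a,b,c),i)"
      by (auto simp: three)
    have abc: "a < n" "b < n" "c < n" using m(1) TA AY by auto
    show "e \<in> S3n n A"
    proof (cases "a = b")
      case True
      have s0: "{(a,0),(a,1),(a,2)} \<in> bose_S n A"
        unfolding bose_S_def bose_S2_def
        by (rule UnI2, rule CollectI, rule exI[of _ a]) (use abc in simp)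
      from m(2) consider "i = 0" | "i = 1" | "i = 2" by blast
      then show ?thesis
      proof cases
        case 1
        then have "e = ((a,0),(a,1),(a,2))" using m(3) True liftg_simp[of a b c i] by simp
        then show ?thesis using s0 unfolding S3n_def by (simp add: sls_mem)
      next
        case 2
        then have "e = ((a,1),(a,2),(a,0))" using m(3) True liftg_simp[of a b c i] by simp
        moreover have "{(a,1),(a,2),(a,0)} = {(a,0),(a,1),(a::nat,2::nat)}" by blast
        ultimately show ?thesis using s0 unfolding S3n_def by (simp add: sls_mem)
      next
        case 3
        then have "e = ((a,2),(a,0),(a,1))" using m(3) True liftg_simp[of a b c i] by simp
        moreover have "{(a,2),(a,0),(a,1)} = {(a,0),(a,1),(a::nat,2::nat)}" by blast
        ultimately show ?thesis using s0 unfolding S3n_def by (simp add: sls_mem)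
      qed
    next
      case False
      have "{(a,i),(b,i),(c,(i+1) mod 3)} \<in> bose_S n A"
      proof -
        have A: "(a,b,c) \<in> A" using m(1) TA by blast
        have i3: "i \<in> {0..<3}" using m(2) by auto
        have "{(a,i),(b,i),(c,(i+1) mod 3)} \<in> bose_S1 A"
          unfolding bose_S1_def
          by (rule CollectI, rule exI[of _ a], rule exI[of _ b], rule exI[of _ c], rule exI[of _ i])
             (use A False i3 in simp)
        then show ?thesis unfolding bose_S_def by (rule UnI1)
      qed
      moreover have "e = ((a,i),(b,i),(c,(i+1) mod 3))" using False m(3) liftg_simp[of a b c i] by simp
      moreover have "i \<noteq> (i+1) mod 3" using m(2) by auto
      then have "(a,i) \<noteq> (b,i)" "(b,i) \<noteq> (c,(i+1) mod 3)" "(a,i) \<noteq> (c,(i+1) mod 3)"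
        using False by auto
      ultimately show ?thesis unfolding S3n_def by (simp add: sls_mem)
    qed
  qed
  have card: "card (liftg ` (T \<times> {0..<3})) = card (bose_X n)"
    using card_image[OF inj] fT cT by (simp add: bose_X_def card_cartesian_product)
  have R: "\<forall>r\<in>bose_X n. \<exists>!e. e \<in> liftg ` (T \<times> {0..<3}) \<and> fst e = r"
  proof
    fix r assume "r \<in> bose_X n"
    then obtain x i where r: "r = (x,i)" "x < n" "i < 3" by (auto simp: bose_X_def)
    have ex1: "\<exists>!e. e \<in> T \<and> fst e = x" using rows r by simp
    then obtain t where t: "t \<in> T" "fst t = x" by blast
    show "\<exists>!e. e \<in> liftg ` (T \<times> {0..<3}) \<and> fst e = r"
    proof (rule ex1I[of _ "liftg (t,i)"])
      show "liftg (t, i) \<in> liftg ` (T \<times> {0..<3}) \<and> fst (liftg (t, i)) = r"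
      proof
        show "liftg (t, i) \<in> liftg ` (T \<times> {0..<3})" using t r by (intro imageI) auto
        show "fst (liftg (t, i)) = r" using t r by (cases t rule: prod_cases3) (auto simp: liftg_simp)
      qed
    next
      fix e assume "e \<in> liftg ` (T \<times> {0..<3}) \<and> fst e = r"
      then obtain t' j where "t' \<in> T" "j < 3" "e = liftg (t',j)" "fst e = r" by auto
      moreover then have "fst t' = x \<and> j = i" using r by (cases t' rule: prod_cases3, auto simp: liftg_simp split: if_splits)
      moreover have "t' = t" using ex1 t \<open>t' \<in> T\<close> \<open>fst t' = x \<and> j = i\<close> by blast
      ultimately show "e = liftg (t, i)" by simp
    qed
  qed
  have C: "\<forall>r\<in>bose_X n. \<exists>!e. e \<in> liftg ` (T \<times> {0..<3}) \<and> fst (snd e) = r"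
  proof
    fix r assume "r \<in> bose_X n"
    then obtain x i where r: "r = (x,i)" "x < n" "i < 3" by (auto simp: bose_X_def)
    have ex1: "\<exists>!e. e \<in> T \<and> fst (snd e) = x" using cols r by simp
    then obtain t where t: "t \<in> T" "fst (snd t) = x" by blast
    obtain a b c where tt: "t = (a,b,c)" by (cases t) auto
    define j where "j = (if a = b then (i + 2) mod 3 else i)"
    have j3: "j < 3" using r by (auto simp: j_def)
    show "\<exists>!e. e \<in> liftg ` (T \<times> {0..<3}) \<and> fst (snd e) = r"
    proof (rule ex1I[of _ "liftg (t,j)"])
      show "liftg (t, j) \<in> liftg ` (T \<times> {0..<3}) \<and> fst (snd (liftg (t, j))) = r"
      proof
        show "liftg (t, j) \<in> liftg ` (T \<times> {0..<3})" using t j3 by (intro imageI) auto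
        show "fst (snd (liftg (t, j))) = r" proof -
          have "i = 0 \<or> i = 1 \<or> i = 2" using r by auto
          then show ?thesis using t r tt unfolding j_def by (elim disjE) (auto simp: liftg_simp)
        qed
      qed
    next
      fix e assume "e \<in> liftg ` (T \<times> {0..<3}) \<and> fst (snd e) = r"
      then obtain t' k where k: "t' \<in> T" "k < 3" "e = liftg (t',k)" "fst (snd e) = r" by auto
      obtain a' b' c' where tt': "t' = (a',b',c')" by (cases t') auto
      have "fst (snd t') = x" using k r tt' by (auto simp: liftg_simp split: if_splits)
      then have "t' = t" using ex1 t k by blast
      moreover have "k = 0 \<or> k = 1 \<or> k = 2" using k by auto
      ultimately have "k = j" using k r tt tt' unfolding j_def
        by (elim disjE) (auto simp: liftg_simp split: if_splits)
      then show "e = liftg (t, j)" using k \<open>t' = t\<close> by simp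
    qed
  qed
  have S: "inj_on (\<lambda>e. snd (snd e)) (liftg ` (T \<times> {0..<3}))"
  proof (rule inj_onI, elim imageE)
    fix e e' p p' assume h: "snd (snd e) = snd (snd e')" "p \<in> T \<times> {0..<3}" "e = liftg p"
       "p' \<in> T \<times> {0..<3}" "e' = liftg p'"
    obtain a b c i where p: "p = ((a,b,c),i)" "(a,b,c) \<in> T" "i < 3" using h by auto
    obtain a' b' c' i' where p': "p' = ((a',b',c'),i')" "(a',b',c') \<in> T" "i' < 3" using h by auto
    have g1: "a = b \<longrightarrow> c = a" "a' = b' \<longrightarrow> c' = a'" using p p' G by (auto simp: good_def)
    have "c = c'" using h p p' g1 by (auto simp: liftg_simp split: if_splits)
    then have "(a,b,c) = (a',b',c')" using syms p p' unfolding inj_on_def by force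
    then have "i = i'" using h p p' g1 unfolding three by (auto simp: liftg_simp split: if_splits)
    then show "e = e'" using h p p' \<open>(a,b,c) = (a',b',c')\<close> by simp
  qed
  show ?thesis unfolding transversal_def eq
    using sub card R C S fT by auto
qed

lemma lift_sub:
  assumes "T1 \<subseteq> good" "T2 \<subseteq> good" "lift_transversal T1 = lift_transversal T2"
  shows "T1 \<subseteq> T2"
proof
  fix x assume x: "x \<in> T1"
  have "liftg (x,0) \<in> liftg ` (T1 \<times> {0..<3})" using x by (intro imageI) auto
  then have "liftg (x,0) \<in> liftg ` (T2 \<times> {0..<3})" using assms lift_eq by metis
  then obtain p where p: "p \<in> T2 \<times> {0..<3}" "liftg (x,0) = liftg p" by blast
  have "(x,0) = p"
    using inj_onD[OF liftg_inj p(2)] p(1) x assms(1,2) by auto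
  then show "x \<in> T2" using p(1) by auto
qed

theorem mainTheorem3:
  fixes n :: nat and A :: "(nat \<times> nat \<times> nat) set"
  assumes "odd n"
    and "latin_square {0..<n} A"
    and idem: "\<forall>x\<in>{0..<n}. (x, x, x) \<in> A"
    and comm: "\<forall>x y z. (x, y, z) \<in> A \<longrightarrow> (y, x, z) \<in> A"
  shows "(\<forall>T. transversal {0..<n} A T \<longrightarrow>
            transversal (bose_X n) (S3n n A) (lift_transversal T))
       \<and> inj_on lift_transversal {T. transversal {0..<n} A T}
       \<and> (\<forall>T1 T2. transversal {0..<n} A T1 \<longrightarrow> transversal {0..<n} A T2 \<longrightarrow>
            T1 \<inter> T2 = {} \<longrightarrow> lift_transversal T1 \<inter> lift_transversal T2 = {})"
proof (intro conjI allI impI)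
  fix T assume "transversal {0..<n} A T"
  then show "transversal (bose_X n) (S3n n A) (lift_transversal T)"
    using trans_lift[OF assms(2) idem] by blast
next
  show "inj_on lift_transversal {T. transversal {0..<n} A T}"
  proof (rule inj_onI)
    fix T1 T2 assume "T1 \<in> {T. transversal {0..<n} A T}" "T2 \<in> {T. transversal {0..<n} A T}"
      and eq: "lift_transversal T1 = lift_transversal T2"
    then have g: "T1 \<subseteq> good" "T2 \<subseteq> good" using trans_good[OF assms(2) idem] by auto
    show "T1 = T2" using lift_sub[OF g eq] lift_sub[OF g(2,1) eq[symmetric]] by blast
  qed
next
  fix T1 T2 assume t1: "transversal {0..<n} A T1" and t2: "transversal {0..<n} A T2"
    and d: "T1 \<inter> T2 = {}"
  have g: "T1 \<subseteq> good" "T2 \<subseteq> good" using trans_good[OF assms(2) idem] t1 t2 by auto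
  show "lift_transversal T1 \<inter> lift_transversal T2 = {}"
  proof (rule ccontr)
    assume "lift_transversal T1 \<inter> lift_transversal T2 \<noteq> {}"
    then obtain e where "e \<in> lift_transversal T1" "e \<in> lift_transversal T2" by blast
    then have e1: "e \<in> liftg ` (T1 \<times> {0..<3})" and e2: "e \<in> liftg ` (T2 \<times> {0..<3})"
      using lift_eq[OF g(1)] lift_eq[OF g(2)] by simp_all
    from e1 obtain p where p1: "p \<in> T1 \<times> {0..<3}" "e = liftg p" by (rule imageE)
    from e2 obtain q where q1: "q \<in> T2 \<times> {0..<3}" "e = liftg q" by (rule imageE)
    have p: "p \<in> T1 \<times> {0..<3}" "q \<in> T2 \<times> {0..<3}" "liftg p = liftg q"
      using p1 q1 by simp_all
    have "p \<in> good \<times> {0..<3}" "q \<in> good \<times> {0..<3}" using p(1,2) g by (auto simp del: good_def)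
    then have "p = q" using inj_onD[OF liftg_inj p(3)] by blast
    then show False using p(1,2) d by (auto simp del: good_def)
  qed
qed

end
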